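(* Let $t\le 1$ and let $M\in\mathbb{R}^{n\times n}$ be a distance matrix (i.e. $M_{ij}\ge 0$, $M_{ii}=0$, $M_{ij}=M_{ji}$, $M_{ik}\le M_{ij}+M_{jk}$ for all $i,j,k$). Let $\bar M=\sum_{i,j}M_{ij}$. Then for all $\tilde x,\tilde y,\tilde z\in\tilde\Delta_n$, $$\big(\tilde d^t_M(\tilde x,\tilde z)\big)^{2-t}\le \bar M^{\,1-t}\Big(\tilde d^t_M(\tilde x,\tilde y)+\tilde d^t_M(\tilde y,\tilde z)\Big).$$
   Context: $t^*=1/(2-t)$. All powers of vectors and matrices are entrywise. The co-simplex is $\tilde\Delta_n=\{\tilde p\in\mathbb{R}^n:\tilde p\ge 0,\ \sum_i \tilde p_i^{1/t^*}=1\}$. For $\tilde r,\tilde c\in\tilde\Delta_n$, the co-polytope is $\tilde U_n(\tilde r,\tilde c)=\{\tilde P\in\mathbb{R}_{\ge0}^{n\times n}: \sum_j\tilde P_{ij}^{1/t^*}=\tilde r_i^{1/t^*}\ \forall i,\ \sum_i\tilde P_{ij}^{1/t^*}=\tilde c_j^{1/t^*}\ \forall j\}$. $\langle A,B\rangle=\sum_{ij}A_{ij}B_{ij}$. The (unregularized) measured cost is $\tilde d^t_M(\tilde r,\tilde c)=\min_{\tilde P\in\tilde U_n(\tilde r,\tilde c)}\langle\tilde P,M\rangle$. *)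

theory Defs
  imports "HOL-Analysis.Analysis"
begin

text \<open>Index set of size n is a finite type 'n. t* = 1/(2-t), so 1/t* = 2 - t.\<close>

definition tstar :: "real \<Rightarrow> real" where
  "tstar t = 1 / (2 - t)"

definition co_simplex :: "real \<Rightarrow> ('n::finite \<Rightarrow> real) set" where
  "co_simplex t = {p. (\<forall>i. p i \<ge> 0) \<and> (\<Sum>i\<in>UNIV. p i powr (1 / tstar t)) = 1}"

definition co_polytope :: "real \<Rightarrow> ('n::finite \<Rightarrow> real) \<Rightarrow> ('n \<Rightarrow> real) \<Rightarrow> ('n \<Rightarrow> 'n \<Rightarrow> real) set" where
  "co_polytope t r c = {P. (\<forall>i j. P i j \<ge> 0)
      \<and> (\<forall>i. (\<Sum>j\<in>UNIV. P i j powr (1 / tstar t)) = r i powr (1 / tstar t))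
      \<and> (\<forall>j. (\<Sum>i\<in>UNIV. P i j powr (1 / tstar t)) = c j powr (1 / tstar t))}"

definition frob :: "('n::finite \<Rightarrow> 'n \<Rightarrow> real) \<Rightarrow> ('n \<Rightarrow> 'n \<Rightarrow> real) \<Rightarrow> real" where
  "frob A B = (\<Sum>i\<in>UNIV. \<Sum>j\<in>UNIV. A i j * B i j)"

text \<open>Measured cost: minimum of <P,M> over the co-polytope (written as the infimum;
  the minimum is attained since the co-polytope is nonempty and compact).\<close>
definition measured_cost :: "real \<Rightarrow> ('n::finite \<Rightarrow> 'n \<Rightarrow> real) \<Rightarrow> ('n \<Rightarrow> real) \<Rightarrow> ('n \<Rightarrow> real) \<Rightarrow> real" where
  "measured_cost t M r c = Inf ((\<lambda>P. frob P M) ` co_polytope t r c)"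

definition distance_matrix :: "('n::finite \<Rightarrow> 'n \<Rightarrow> real) \<Rightarrow> bool" where
  "distance_matrix M \<longleftrightarrow> (\<forall>i j. M i j \<ge> 0) \<and> (\<forall>i. M i i = 0) \<and> (\<forall>i j. M i j = M j i)
     \<and> (\<forall>i j k. M i k \<le> M i j + M j k)"

end

theory Submission
  imports Defs
begin

lemma young_pt:
  fixes q c \<theta> :: real
  assumes "0 \<le> \<theta>" "\<theta> \<le> 1" "0 \<le> q" "0 < c"
  shows "q powr \<theta> * c powr (1-\<theta>) \<le> \<theta>*q + (1-\<theta>)*c"
proof (cases "q = 0")
  case True
  then show ?thesis using assms by (cases "\<theta> = 0") auto
next
  case False
  then show ?thesis using Youngs_inequality_0[of \<theta> "1-\<theta>" q c] assms by auto
qed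

lemma holder_aux:
  fixes m q :: "'a \<Rightarrow> real" and s :: real
  assumes S: "finite S" and m: "\<And>i. m i \<ge> 0" and q: "\<And>i. q i \<ge> 0" and s: "s \<ge> 1"
  shows "(\<Sum>i\<in>S. m i * q i powr (1/s)) powr s \<le> (\<Sum>i\<in>S. m i) powr (s-1) * (\<Sum>i\<in>S. m i * q i)"
proof -
  define A where "A = (\<Sum>i\<in>S. m i * q i)"
  define B where "B = (\<Sum>i\<in>S. m i)"
  define \<theta> where "\<theta> = 1/s"
  have th: "0 < \<theta>" "\<theta> \<le> 1" using s by (auto simp: \<theta>_def)
  have A0: "A \<ge> 0" unfolding A_def using m q by (intro sum_nonneg) auto
  have B0: "B \<ge> 0" unfolding B_def using m by (intro sum_nonneg) auto
  have L0: "(\<Sum>i\<in>S. m i * q i powr \<theta>) \<ge> 0" using m q by (intro sum_nonneg) auto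
  show ?thesis
  proof (cases "A = 0 \<or> B = 0")
    case True
    have "\<forall>i\<in>S. m i * q i powr \<theta> = 0"
    proof
      fix i assume i: "i \<in> S"
      from True show "m i * q i powr \<theta> = 0"
      proof
        assume "A = 0"
        then have "\<forall>i\<in>S. m i * q i = 0" using sum_nonneg_eq_0_iff[OF S, of "\<lambda>i. m i * q i"] m q
          unfolding A_def by auto
        with i show ?thesis by auto
      next
        assume "B = 0"
        then have "\<forall>i\<in>S. m i = 0" using sum_nonneg_eq_0_iff[OF S, of m] m unfolding B_def by auto
        with i show ?thesis by auto
      qed
    qed
    then have "(\<Sum>i\<in>S. m i * q i powr \<theta>) = 0" by (rule sum.neutral)
    then show ?thesis using A0 B0 by (simp add: \<theta>_def A_def[symmetric] B_def[symmetric])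
  next
    case False
    then have Ap: "A > 0" and Bp: "B > 0" using A0 B0 by auto
    define c where "c = A / B"
    have cp: "c > 0" using Ap Bp by (simp add: c_def)
    have "(\<Sum>i\<in>S. m i * q i powr \<theta>) * c powr (1-\<theta>) = (\<Sum>i\<in>S. m i * (q i powr \<theta> * c powr (1-\<theta>)))"
      by (simp add: sum_distrib_right mult.assoc)
    also have "\<dots> \<le> (\<Sum>i\<in>S. m i * (\<theta> * q i + (1-\<theta>) * c))"
      by (intro sum_mono mult_left_mono young_pt) (use th q m cp in auto)
    also have "\<dots> = \<theta> * A + (1-\<theta>) * c * B"
    proof -
      have "(\<Sum>i\<in>S. m i * (\<theta> * q i + (1-\<theta>) * c)) = (\<Sum>i\<in>S. \<theta> * (m i * q i) + ((1-\<theta>) * c) * m i)"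
        by (intro sum.cong) (auto simp: algebra_simps)
      also have "\<dots> = \<theta> * A + ((1-\<theta>) * c) * B"
        by (simp add: A_def B_def sum.distrib sum_distrib_left)
      finally show ?thesis by simp
    qed
    also have "\<dots> = A" using Bp by (simp add: c_def field_simps)
    finally have le: "(\<Sum>i\<in>S. m i * q i powr \<theta>) * c powr (1-\<theta>) \<le> A" .
    have cpos: "c powr (1-\<theta>) > 0" using cp by simp
    have le2: "(\<Sum>i\<in>S. m i * q i powr \<theta>) \<le> A * c powr (\<theta> - 1)"
    proof -
      have one: "c powr (1-\<theta>) * c powr (\<theta> - 1) = 1" using cp by (simp flip: powr_add)
      have "(\<Sum>i\<in>S. m i * q i powr \<theta>) = ((\<Sum>i\<in>S. m i * q i powr \<theta>) * c powr (1-\<theta>)) * c powr (\<theta> - 1)"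
        using one by (simp add: mult.assoc)
      also have "\<dots> \<le> A * c powr (\<theta> - 1)" using le cp by (intro mult_right_mono) auto
      finally show ?thesis .
    qed
    have "(\<Sum>i\<in>S. m i * q i powr \<theta>) powr s \<le> (A * c powr (\<theta> - 1)) powr s"
      using le2 L0 s by (intro powr_mono2) auto
    also have "\<dots> = A powr s * c powr ((\<theta> - 1) * s)"
      using Ap cp by (simp add: powr_mult powr_powr)
    also have "(\<theta> - 1) * s = 1 - s" using s by (simp add: \<theta>_def field_simps)
    also have "A powr s * c powr (1 - s) = B powr (s-1) * A"
    proof -
      have "c powr (1-s) = A powr (1-s) / B powr (1-s)" using Ap Bp by (simp add: c_def powr_divide)
      then have "A powr s * c powr (1 - s) = A powr (s + (1-s)) / B powr (1-s)"
        using Ap by (simp add: powr_add[symmetric])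
      also have "\<dots> = A / B powr (1-s)" using Ap by simp
      also have "\<dots> = B powr (s-1) * A" using Bp by (simp add: field_simps flip: powr_add)
      finally show ?thesis .
    qed
    finally show ?thesis by (simp add: \<theta>_def A_def B_def)
  qed
qed

lemma glue:
  fixes Q Q1 Q2 M :: "'n::finite \<Rightarrow> 'n \<Rightarrow> real" and c :: "'n \<Rightarrow> real"
  assumes Q1: "\<And>i j. Q1 i j \<ge> 0" and Q2: "\<And>i j. Q2 i j \<ge> 0"
    and c1: "\<And>j. (\<Sum>i\<in>UNIV. Q1 i j) = c j" and c2: "\<And>j. (\<Sum>k\<in>UNIV. Q2 j k) = c j"
    and Mtri: "\<And>i j k. M i k \<le> M i j + M j k"
    and Q_def: "Q = (\<lambda>i k. \<Sum>j\<in>UNIV. Q1 i j * Q2 j k / c j)"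
  shows "\<And>i k. Q i k \<ge> 0"
    and "\<And>i. (\<Sum>k\<in>UNIV. Q i k) = (\<Sum>j\<in>UNIV. Q1 i j)"
    and "\<And>k. (\<Sum>i\<in>UNIV. Q i k) = (\<Sum>j\<in>UNIV. Q2 j k)"
    and "(\<Sum>i\<in>UNIV. \<Sum>k\<in>UNIV. Q i k * M i k) \<le>
          (\<Sum>i\<in>UNIV. \<Sum>j\<in>UNIV. Q1 i j * M i j) + (\<Sum>j\<in>UNIV. \<Sum>k\<in>UNIV. Q2 j k * M j k)"
proof -
  have c0: "c j \<ge> 0" for j using c1[of j] Q1 by (metis sum_nonneg)
  have z1: "Q1 i j * (c j / c j) = Q1 i j" for i j
  proof (cases "c j = 0")
    case True
    then have "\<forall>i\<in>UNIV. Q1 i j = 0" using c1[of j] Q1 sum_nonneg_eq_0_iff[of UNIV "\<lambda>i. Q1 i j"] by auto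
    then show ?thesis by auto
  qed auto
  have z2: "Q2 j k * (c j / c j) = Q2 j k" for j k
  proof (cases "c j = 0")
    case True
    then have "\<forall>k\<in>UNIV. Q2 j k = 0" using c2[of j] Q2 sum_nonneg_eq_0_iff[of UNIV "\<lambda>k. Q2 j k"] by auto
    then show ?thesis by auto
  qed auto
  show "Q i k \<ge> 0" for i k unfolding Q_def using Q1 Q2 c0 by (intro sum_nonneg) auto
  show "(\<Sum>k\<in>UNIV. Q i k) = (\<Sum>j\<in>UNIV. Q1 i j)" for i
  proof -
    have "(\<Sum>k\<in>UNIV. Q i k) = (\<Sum>j\<in>UNIV. \<Sum>k\<in>UNIV. Q1 i j * Q2 j k / c j)"
      unfolding Q_def by (rule sum.swap)
    also have "\<dots> = (\<Sum>j\<in>UNIV. Q1 i j * ((\<Sum>k\<in>UNIV. Q2 j k) / c j))"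
      by (simp add: sum_distrib_left sum_divide_distrib)
    also have "\<dots> = (\<Sum>j\<in>UNIV. Q1 i j * (c j / c j))" by (simp only: c2)
    also have "\<dots> = (\<Sum>j\<in>UNIV. Q1 i j)" by (rule sum.cong[OF refl z1])
    finally show ?thesis .
  qed
  show "(\<Sum>i\<in>UNIV. Q i k) = (\<Sum>j\<in>UNIV. Q2 j k)" for k
  proof -
    have "(\<Sum>i\<in>UNIV. Q i k) = (\<Sum>j\<in>UNIV. \<Sum>i\<in>UNIV. Q1 i j * Q2 j k / c j)"
      unfolding Q_def by (rule sum.swap)
    also have "\<dots> = (\<Sum>j\<in>UNIV. Q2 j k * ((\<Sum>i\<in>UNIV. Q1 i j) / c j))"
      by (simp add: sum_distrib_left sum_divide_distrib sum_distrib_right mult.commute)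
    also have "\<dots> = (\<Sum>j\<in>UNIV. Q2 j k * (c j / c j))" by (simp only: c1)
    also have "\<dots> = (\<Sum>j\<in>UNIV. Q2 j k)" by (rule sum.cong[OF refl z2])
    finally show ?thesis .
  qed
  have "(\<Sum>i\<in>UNIV. \<Sum>k\<in>UNIV. Q i k * M i k)
      = (\<Sum>i\<in>UNIV. \<Sum>k\<in>UNIV. \<Sum>j\<in>UNIV. Q1 i j * Q2 j k / c j * M i k)"
    unfolding Q_def by (simp add: sum_distrib_right)
  also have "\<dots> \<le> (\<Sum>i\<in>UNIV. \<Sum>k\<in>UNIV. \<Sum>j\<in>UNIV. Q1 i j * Q2 j k / c j * (M i j + M j k))"
    using Q1 Q2 c0 Mtri by (intro sum_mono mult_left_mono) auto
  also have "\<dots> = (\<Sum>i\<in>UNIV. \<Sum>k\<in>UNIV. \<Sum>j\<in>UNIV. Q1 i j * M i j * (Q2 j k / c j))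
                  + (\<Sum>i\<in>UNIV. \<Sum>k\<in>UNIV. \<Sum>j\<in>UNIV. Q2 j k * M j k * (Q1 i j / c j))"
  proof -
    have pt: "Q1 i j * Q2 j k / c j * (M i j + M j k) = Q1 i j * M i j * (Q2 j k / c j) + Q2 j k * M j k * (Q1 i j / c j)" for i j k
      by (simp add: divide_inverse ring_distribs mult_ac)
    show ?thesis by (simp only: pt sum.distrib)
  qed
  also have "(\<Sum>i\<in>UNIV. \<Sum>k\<in>UNIV. \<Sum>j\<in>UNIV. Q1 i j * M i j * (Q2 j k / c j))
      = (\<Sum>i\<in>UNIV. \<Sum>j\<in>UNIV. Q1 i j * M i j * ((\<Sum>k\<in>UNIV. Q2 j k) / c j))"
  proof -
    have "(\<Sum>i\<in>UNIV. \<Sum>k\<in>UNIV. \<Sum>j\<in>UNIV. Q1 i j * M i j * (Q2 j k / c j))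
        = (\<Sum>i\<in>UNIV. \<Sum>j\<in>UNIV. \<Sum>k\<in>UNIV. Q1 i j * M i j * (Q2 j k / c j))"
      by (intro sum.cong refl sum.swap)
    then show ?thesis by (simp add: sum_distrib_left sum_divide_distrib)
  qed
  also have "\<dots> = (\<Sum>i\<in>UNIV. \<Sum>j\<in>UNIV. Q1 i j * M i j)"
  proof -
    have "\<And>i j. Q1 i j * M i j * ((\<Sum>k\<in>UNIV. Q2 j k) / c j) = Q1 i j * M i j"
      by (simp only: c2) (metis z1 mult.assoc mult.commute)
    then show ?thesis by simp
  qed
  also have "(\<Sum>i\<in>UNIV. \<Sum>k\<in>UNIV. \<Sum>j\<in>UNIV. Q2 j k * M j k * (Q1 i j / c j))
      = (\<Sum>j\<in>UNIV. \<Sum>k\<in>UNIV. Q2 j k * M j k * ((\<Sum>i\<in>UNIV. Q1 i j) / c j))"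
  proof -
    have "(\<Sum>i\<in>UNIV. \<Sum>k\<in>UNIV. \<Sum>j\<in>UNIV. Q2 j k * M j k * (Q1 i j / c j))
        = (\<Sum>i\<in>UNIV. \<Sum>j\<in>UNIV. \<Sum>k\<in>UNIV. Q2 j k * M j k * (Q1 i j / c j))"
      by (intro sum.cong refl sum.swap)
    also have "\<dots> = (\<Sum>j\<in>UNIV. \<Sum>i\<in>UNIV. \<Sum>k\<in>UNIV. Q2 j k * M j k * (Q1 i j / c j))"
      by (rule sum.swap)
    also have "\<dots> = (\<Sum>j\<in>UNIV. \<Sum>k\<in>UNIV. \<Sum>i\<in>UNIV. Q2 j k * M j k * (Q1 i j / c j))"
      by (intro sum.cong refl sum.swap)
    finally show ?thesis by (simp add: sum_distrib_left sum_divide_distrib)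
  qed
  also have "\<dots> = (\<Sum>j\<in>UNIV. \<Sum>k\<in>UNIV. Q2 j k * M j k)"
  proof -
    have "\<And>j k. Q2 j k * M j k * ((\<Sum>i\<in>UNIV. Q1 i j) / c j) = Q2 j k * M j k"
      by (simp only: c1) (metis z2 mult.assoc mult.commute)
    then show ?thesis by simp
  qed
  finally show "(\<Sum>i\<in>UNIV. \<Sum>k\<in>UNIV. Q i k * M i k) \<le>
          (\<Sum>i\<in>UNIV. \<Sum>j\<in>UNIV. Q1 i j * M i j) + (\<Sum>j\<in>UNIV. \<Sum>k\<in>UNIV. Q2 j k * M j k)" .
qed

lemma holder2:
  fixes M Q :: "'n::finite \<Rightarrow> 'n \<Rightarrow> real" and s :: real
  assumes m: "\<And>i k. M i k \<ge> 0" and q: "\<And>i k. Q i k \<ge> 0" and s: "s \<ge> 1"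
  shows "(\<Sum>i\<in>UNIV. \<Sum>k\<in>UNIV. M i k * Q i k powr (1/s)) powr s
     \<le> (\<Sum>i\<in>UNIV. \<Sum>k\<in>UNIV. M i k) powr (s-1) * (\<Sum>i\<in>UNIV. \<Sum>k\<in>UNIV. M i k * Q i k)"
proof -
  have e: "(\<Sum>i\<in>UNIV. \<Sum>k\<in>UNIV. f i k) = (\<Sum>p\<in>UNIV. f (fst p) (snd p))" for f :: "'n \<Rightarrow> 'n \<Rightarrow> real"
  proof -
    have "(\<Sum>i\<in>UNIV. \<Sum>k\<in>UNIV. f i k) = (\<Sum>p\<in>UNIV \<times> UNIV. f (fst p) (snd p))"
      by (simp add: sum.cartesian_product split_beta)
    then show ?thesis by simp
  qed
  show ?thesis
    unfolding e[of "\<lambda>i k. M i k * Q i k powr (1/s)"] e[of "\<lambda>i k. M i k"] e[of "\<lambda>i k. M i k * Q i k"]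
    using holder_aux[of "UNIV :: ('n \<times> 'n) set" "\<lambda>p. M (fst p) (snd p)" "\<lambda>p. Q (fst p) (snd p)" s] m q s
    by simp
qed

lemma cp_nonempty:
  assumes "r \<in> co_simplex t" "c \<in> co_simplex t"
  shows "(\<lambda>i j. r i * c j) \<in> co_polytope t r c"
proof -
  have r0: "\<And>i. r i \<ge> 0" and c0: "\<And>i. c i \<ge> 0" and rs: "(\<Sum>i\<in>UNIV. r i powr (1 / tstar t)) = 1"
    and cs: "(\<Sum>i\<in>UNIV. c i powr (1 / tstar t)) = 1" using assms by (auto simp: co_simplex_def)
  show ?thesis unfolding co_polytope_def
    using r0 c0 by (auto simp: powr_mult sum_distrib_left[symmetric] sum_distrib_right[symmetric] rs cs)
qed

lemma frob_nonneg:
  assumes "\<And>i j. P i j \<ge> 0" "\<And>i j. M i j \<ge> (0::real)"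
  shows "frob P M \<ge> 0"
  unfolding frob_def using assms by (intro sum_nonneg mult_nonneg_nonneg) auto

lemma mc_lower:
  assumes "P \<in> co_polytope t r c" "\<And>i j. M i j \<ge> 0"
  shows "measured_cost t M r c \<le> frob P M"
  unfolding measured_cost_def
proof (rule cInf_lower)
  show "frob P M \<in> (\<lambda>P. frob P M) ` co_polytope t r c" using assms by auto
  show "bdd_below ((\<lambda>P. frob P M) ` co_polytope t r c)"
    by (rule bdd_belowI[of _ 0]) (use assms in \<open>auto simp: co_polytope_def intro!: frob_nonneg\<close>)
qed

lemma mc_greatest:
  assumes "co_polytope t r c \<noteq> {}" "\<And>P. P \<in> co_polytope t r c \<Longrightarrow> a \<le> frob P M"
  shows "a \<le> measured_cost t M r c"
  unfolding measured_cost_def using assms by (intro cInf_greatest) auto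

lemma entry_le:
  assumes "P \<in> co_polytope t r c" "r \<in> co_simplex t" "t \<le> 1"
  shows "P i j powr (2 - t) \<le> P i j"
proof -
  have ts: "1 / tstar t = 2 - t" by (simp add: tstar_def)
  have P0: "P i j \<ge> 0" and row: "(\<Sum>j\<in>UNIV. P i j powr (2-t)) = r i powr (2-t)"
    using assms(1) by (auto simp: co_polytope_def ts)
  have r0: "\<And>i. r i \<ge> 0" and rs: "(\<Sum>i\<in>UNIV. r i powr (2-t)) = 1"
    using assms(2) by (auto simp: co_simplex_def ts)
  have "P i j powr (2-t) \<le> (\<Sum>j\<in>UNIV. P i j powr (2-t))"
    by (rule member_le_sum) auto
  also have "\<dots> = r i powr (2-t)" by (rule row)
  also have "\<dots> \<le> (\<Sum>i\<in>UNIV. r i powr (2-t))" by (rule member_le_sum) auto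
  finally have le1: "P i j powr (2-t) \<le> 1" using rs by simp
  have "P i j \<le> 1"
  proof (rule ccontr)
    assume "\<not> P i j \<le> 1"
    then have "1 powr (2-t) < P i j powr (2-t)" using assms(3) by (intro powr_less_mono2) auto
    with le1 show False by simp
  qed
  then have "P i j powr (2-t) \<le> P i j powr 1" using P0 assms(3) by (intro powr_mono') auto
  then show ?thesis using P0 by (simp add: powr_one)
qed

theorem proposition1:
  fixes t :: real and M :: "'n::finite \<Rightarrow> 'n \<Rightarrow> real" and x y z :: "'n \<Rightarrow> real"
  assumes "t \<le> 1"
    and "distance_matrix M"
    and "x \<in> co_simplex t" and "y \<in> co_simplex t" and "z \<in> co_simplex t"
  shows "(measured_cost t M x z) powr (2 - t)
     \<le> (\<Sum>i\<in>UNIV. \<Sum>j\<in>UNIV. M i j) powr (1 - t) * (measured_cost t M x y + measured_cost t M y z)"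
proof -
  define s where "s = 2 - t"
  have s1: "s \<ge> 1" using assms(1) by (simp add: s_def)
  have ts: "1 / tstar t = s" by (simp add: tstar_def s_def)
  have M0: "\<And>i j. M i j \<ge> 0" and Mtri: "\<And>i j k. M i k \<le> M i j + M j k"
    using assms(2) by (auto simp: distance_matrix_def)
  define K where "K = (\<Sum>i\<in>UNIV. \<Sum>j\<in>UNIV. M i j) powr (1 - t)"
  have K0: "K \<ge> 0" by (simp add: K_def)
  have sK: "s - 1 = 1 - t" by (simp add: s_def)
  define d where "d = measured_cost t M x z"
  have ne: "co_polytope t x y \<noteq> {}" "co_polytope t y z \<noteq> {}" "co_polytope t x z \<noteq> {}"
    using cp_nonempty assms(3,4,5) by blast+
  have d0: "d \<ge> 0" unfolding d_def
    by (rule mc_greatest[OF ne(3)]) (auto simp: co_polytope_def intro!: frob_nonneg M0)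
  have key: "d powr s \<le> K * (frob P1 M + frob P2 M)"
    if P1: "P1 \<in> co_polytope t x y" and P2: "P2 \<in> co_polytope t y z" for P1 P2
  proof -
    define Q1 where "Q1 = (\<lambda>i j. P1 i j powr s)"
    define Q2 where "Q2 = (\<lambda>i j. P2 i j powr s)"
    define c where "c = (\<lambda>j. y j powr s)"
    have P10: "\<And>i j. P1 i j \<ge> 0" and P1r: "\<And>i. (\<Sum>j\<in>UNIV. Q1 i j) = x i powr s"
      and P1c: "\<And>j. (\<Sum>i\<in>UNIV. Q1 i j) = c j"
      using P1 by (auto simp: co_polytope_def ts Q1_def c_def)
    have P20: "\<And>i j. P2 i j \<ge> 0" and P2r: "\<And>j. (\<Sum>k\<in>UNIV. Q2 j k) = c j"
      and P2c: "\<And>k. (\<Sum>j\<in>UNIV. Q2 j k) = z k powr s"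
      using P2 by (auto simp: co_polytope_def ts Q2_def c_def)
    have Q10: "\<And>i j. Q1 i j \<ge> 0" and Q20: "\<And>i j. Q2 i j \<ge> 0" by (auto simp: Q1_def Q2_def)
    define Q where "Q = (\<lambda>i k. \<Sum>j\<in>UNIV. Q1 i j * Q2 j k / c j)"
    note g = glue[OF Q10 Q20 P1c P2r Mtri Q_def]
    define P where "P = (\<lambda>i k. Q i k powr (1/s))"
    have PQ: "P i k powr s = Q i k" for i k
    proof -
      have "Q i k \<ge> 0" using g(1) by blast
      then show ?thesis using s1 by (simp add: P_def powr_powr)
    qed
    have Pcp: "P \<in> co_polytope t x z"
    proof -
      have P0: "\<forall>i j. P i j \<ge> 0" by (simp add: P_def)
      show ?thesis unfolding co_polytope_def ts using g(2,3) P1r P2c P0 by (simp add: PQ)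
    qed
    have "d \<le> frob P M" unfolding d_def by (rule mc_lower[OF Pcp M0])
    then have "d powr s \<le> (frob P M) powr s" using d0 s1 by (intro powr_mono2) auto
    also have "frob P M = (\<Sum>i\<in>UNIV. \<Sum>k\<in>UNIV. M i k * Q i k powr (1/s))"
      by (simp add: frob_def P_def mult.commute)
    also have "\<dots> powr s \<le> (\<Sum>i\<in>UNIV. \<Sum>k\<in>UNIV. M i k) powr (s-1) * (\<Sum>i\<in>UNIV. \<Sum>k\<in>UNIV. M i k * Q i k)"
      by (rule holder2[OF M0 g(1) s1])
    also have "\<dots> = K * (\<Sum>i\<in>UNIV. \<Sum>k\<in>UNIV. Q i k * M i k)"
      by (simp add: K_def sK mult.commute)
    also have "\<dots> \<le> K * ((\<Sum>i\<in>UNIV. \<Sum>j\<in>UNIV. Q1 i j * M i j) + (\<Sum>j\<in>UNIV. \<Sum>k\<in>UNIV. Q2 j k * M j k))"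
      by (rule mult_left_mono[OF g(4) K0])
    also have "\<dots> \<le> K * (frob P1 M + frob P2 M)"
    proof (rule mult_left_mono[OF _ K0])
      have "Q1 i j \<le> P1 i j" for i j unfolding Q1_def s_def by (rule entry_le[OF P1 assms(3,1)])
      moreover have "Q2 i j \<le> P2 i j" for i j unfolding Q2_def s_def by (rule entry_le[OF P2 assms(4,1)])
      ultimately show "(\<Sum>i\<in>UNIV. \<Sum>j\<in>UNIV. Q1 i j * M i j) + (\<Sum>j\<in>UNIV. \<Sum>k\<in>UNIV. Q2 j k * M j k)
          \<le> frob P1 M + frob P2 M"
        unfolding frob_def by (intro add_mono sum_mono mult_right_mono M0) auto
    qed
    finally show ?thesis .
  qed
  obtain P1 where P1: "P1 \<in> co_polytope t x y" using ne(1) by blast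
  obtain P2 where P2: "P2 \<in> co_polytope t y z" using ne(2) by blast
  have "d powr s \<le> K * (measured_cost t M x y + measured_cost t M y z)"
  proof (cases "K = 0")
    case True
    then show ?thesis using key[OF P1 P2] by simp
  next
    case False
    then have Kp: "K > 0" using K0 by simp
    have A: "d powr s / K - frob P2 M \<le> measured_cost t M x y" if "P2 \<in> co_polytope t y z" for P2
    proof (rule mc_greatest[OF ne(1)])
      fix P1 assume "P1 \<in> co_polytope t x y"
      from key[OF this that] Kp show "d powr s / K - frob P2 M \<le> frob P1 M"
        by (simp add: divide_le_eq algebra_simps)
    qed
    have "d powr s / K - measured_cost t M x y \<le> measured_cost t M y z"
      by (rule mc_greatest[OF ne(2)]) (use A in force)
    then show ?thesis using Kp by (simp add: divide_le_eq algebra_simps)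
  qed
  then show ?thesis by (simp add: d_def s_def K_def)
qed

end
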